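(* Let $\beta\ne0$, and consider the episodic MDP with finite state and action spaces, a tabular stochastic policy $\pi_\theta$, soft value functions $V^\beta_{\pi_\theta},Q^\beta_{\pi_\theta}$ and behavior state weights $\rho_b$ as in the context. Define $$g(\pi_\theta)=\frac1\beta\sum_{s\in\mathcal S}\rho_b(s)\sum_{a\in\mathcal A}\nabla_\theta\pi_\theta(a|s)\,e^{\beta Q^\beta_{\pi_\theta}(s,a)},$$ where $Q^\beta_{\pi_\theta}$ is held fixed (not differentiated), and let $\theta'=\theta+\alpha\,g(\pi_\theta)$. Then there exists $\epsilon>0$ such that for all $0<\alpha<\epsilon$, $$V^\beta_{\pi_\theta}(s)\le V^\beta_{\pi_{\theta'}}(s)\qquad\text{for all }s\in\mathcal S.$$
   Context: Episodic MDP: finite state space $\mathcal S$, finite action space $\mathcal A$, transition probabilities $p(s'|s,a)$, reward $r(s,a)$. There is a set $\mathcal S_{\rm term}\subset\mathcal S$ of absorbing terminal states with $r(s,a)=0$ and $p(\mathcal S_{\rm term}|s,a)=1$ for $s\in\mathcal S_{\rm term}$, and an integer $T$ such that from any state, under any sequence of actions, the state lies in $\mathcal S_{\rm term}$ after at most $T$ transitions with probability 1. Tabular stochastic policy: $\theta=(\theta_s)_{s\in\mathcal S}$, and for each $s$ the distribution $\pi_\theta(\cdot|s)$ on $\mathcal A$ depends only on the block $\theta_s$, continuously differentiably (e.g. softmax $\pi_\theta(a|s)=e^{\theta_{s,a}}/\sum_{a'}e^{\theta_{s,a'}}$). Soft value functions: $V^\beta_\pi(s)=\frac1\beta\log\mathbb{E}_\pi\big[e^{\beta\sum_{t\ge1}r_t}\mid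 s_1=s\big]$, $Q^\beta_\pi(s,a)=\frac1\beta\log\mathbb{E}_\pi\big[e^{\beta\sum_{t\ge1}r_t}\mid s_1=s,a_1=a\big]$; they satisfy $V^\beta_\pi(s)=\frac1\beta\log\sum_a\pi(a|s)e^{\beta Q^\beta_\pi(s,a)}$ and $Q^\beta_\pi(s,a)=r(s,a)+\frac1\beta\log\sum_{s'}p(s'|s,a)e^{\beta V^\beta_\pi(s')}$. $\rho_b:\mathcal S\to[0,\infty)$ is the state distribution of an arbitrary behavior policy (any nonnegative weights). *)

theory Defs
  imports "HOL-Analysis.Analysis"
begin

text \<open>Policies are given as functions pol s a = probability of action a in state s.
  exp_return beta p r pol n s is the expectation, under pol started in s_1 = s, of
  exp(beta * (r_1 + ... + r_n)) (sum of the first n rewards).\<close>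

fun exp_return :: "real \<Rightarrow> ('s::finite \<Rightarrow> 'a::finite \<Rightarrow> 's \<Rightarrow> real) \<Rightarrow> ('s \<Rightarrow> 'a \<Rightarrow> real)
    \<Rightarrow> ('s \<Rightarrow> 'a \<Rightarrow> real) \<Rightarrow> nat \<Rightarrow> 's \<Rightarrow> real" where
  "exp_return beta p r pol 0 s = 1"
| "exp_return beta p r pol (Suc n) s =
     (\<Sum>a\<in>UNIV. pol s a * exp (beta * r s a) *
        (\<Sum>s'\<in>UNIV. p s a s' * exp_return beta p r pol n s'))"

text \<open>Same, conditioned additionally on a_1 = a (first n+1 rewards).\<close>
definition exp_return_sa :: "real \<Rightarrow> ('s::finite \<Rightarrow> 'a::finite \<Rightarrow> 's \<Rightarrow> real) \<Rightarrow> ('s \<Rightarrow> 'a \<Rightarrow> real)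
    \<Rightarrow> ('s \<Rightarrow> 'a \<Rightarrow> real) \<Rightarrow> nat \<Rightarrow> 's \<Rightarrow> 'a \<Rightarrow> real" where
  "exp_return_sa beta p r pol n s a =
     exp (beta * r s a) * (\<Sum>s'\<in>UNIV. p s a s' * exp_return beta p r pol n s')"

text \<open>Soft value functions: the infinite reward sum is the limit of the partial sums
  (which is eventually constant, since terminal states are absorbing with zero reward).\<close>
definition softV :: "real \<Rightarrow> ('s::finite \<Rightarrow> 'a::finite \<Rightarrow> 's \<Rightarrow> real) \<Rightarrow> ('s \<Rightarrow> 'a \<Rightarrow> real)
    \<Rightarrow> ('s \<Rightarrow> 'a \<Rightarrow> real) \<Rightarrow> 's \<Rightarrow> real" where
  "softV beta p r pol s = ln (lim (\<lambda>n. exp_return beta p r pol n s)) / beta"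

definition softQ :: "real \<Rightarrow> ('s::finite \<Rightarrow> 'a::finite \<Rightarrow> 's \<Rightarrow> real) \<Rightarrow> ('s \<Rightarrow> 'a \<Rightarrow> real)
    \<Rightarrow> ('s \<Rightarrow> 'a \<Rightarrow> real) \<Rightarrow> 's \<Rightarrow> 'a \<Rightarrow> real" where
  "softQ beta p r pol s a = ln (lim (\<lambda>n. exp_return_sa beta p r pol n s a)) / beta"

end

theory Submission
  imports Defs
begin


fun good :: "('s \<Rightarrow> 'a \<Rightarrow> 's \<Rightarrow> real) \<Rightarrow> 's set \<Rightarrow> nat \<Rightarrow> 's \<Rightarrow> bool" where
  "good p St 0 s = (s \<in> St)"
| "good p St (Suc k) s = (s \<in> St \<or> (\<forall>a s'. 0 < p s a s' \<longrightarrow> good p St k s'))"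

lemma not_good_path:
  "\<not> good p St k s \<Longrightarrow> \<exists>ss as. ss 0 = s \<and> (\<forall>t<k. 0 < p (ss t) (as t) (ss (Suc t))) \<and> (\<forall>t\<le>k. ss t \<notin> St)"
proof (induction k arbitrary: s)
  case 0 then show ?case by (intro exI[of _ "\<lambda>_. s"]) auto
next
  case (Suc k)
  then obtain a s' where s: "s \<notin> St" "0 < p s a s'" "\<not> good p St k s'" by auto
  from Suc.IH[OF s(3)] obtain ss as where h: "ss 0 = s'" "\<forall>t<k. 0 < p (ss t) (as t) (ss (Suc t))" "\<forall>t\<le>k. ss t \<notin> St"
    by blast
  define ss' where "ss' t = (if t = 0 then s else ss (t - 1))" for t
  define as' where "as' t = (if t = 0 then a else as (t - 1))" for t
  have "\<forall>t<Suc k. 0 < p (ss' t) (as' t) (ss' (Suc t))"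
  proof (intro allI impI)
    fix t assume "t < Suc k"
    show "0 < p (ss' t) (as' t) (ss' (Suc t))"
    proof (cases t)
      case 0 then show ?thesis using s h by (simp add: ss'_def as'_def)
    next
      case (Suc t') then show ?thesis using h \<open>t < Suc k\<close> by (simp add: ss'_def as'_def)
    qed
  qed
  moreover have "\<forall>t\<le>Suc k. ss' t \<notin> St"
  proof (intro allI impI)
    fix t assume "t \<le> Suc k"
    then show "ss' t \<notin> St"
    proof (cases t)
      case 0 then show ?thesis using s by (simp add: ss'_def)
    next
      case (Suc t') then show ?thesis using h \<open>t \<le> Suc k\<close> by (simp add: ss'_def)
    qed
  qed
  ultimately show ?case by (intro exI[of _ ss'] exI[of _ as']) (simp add: ss'_def)
qed

lemma horizon_good:
  fixes p :: "'s \<Rightarrow> 'a \<Rightarrow> 's \<Rightarrow> real"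
  assumes "\<forall>(ss::nat\<Rightarrow>'s) (as::nat\<Rightarrow>'a). (\<forall>t<T. 0 < p (ss t) (as t) (ss (Suc t))) \<longrightarrow> (\<exists>t\<le>T. ss t \<in> St)"
  shows "good p St T s"
proof (rule ccontr)
  assume "\<not> ?thesis"
  then obtain ss as where h: "\<forall>t<T. 0 < p (ss t) (as t) (ss (Suc t))" "\<forall>t\<le>T. ss t \<notin> St"
    using not_good_path[of p St T s] by blast
  then show False using assms by blast
qed

locale mdp =
  fixes beta :: real and p :: "'s::finite \<Rightarrow> 'a::finite \<Rightarrow> 's \<Rightarrow> real" and r :: "'s \<Rightarrow> 'a \<Rightarrow> real"
    and St :: "'s set"
  assumes p_nonneg: "\<forall>s a s'. 0 \<le> p s a s'" and p_sum: "\<forall>s a. (\<Sum>s'\<in>UNIV. p s a s') = 1"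
    and term_reward: "\<forall>s\<in>St. \<forall>a. r s a = 0"
    and term_absorb: "\<forall>s\<in>St. \<forall>a. (\<Sum>s'\<in>St. p s a s') = 1"
begin

definition valid :: "('s \<Rightarrow> 'a \<Rightarrow> real) \<Rightarrow> bool" where
  "valid pol \<longleftrightarrow> (\<forall>s a. 0 \<le> pol s a) \<and> (\<forall>s. (\<Sum>a\<in>UNIV. pol s a) = 1)"

lemma p_out: assumes "s \<in> St" "s' \<notin> St" shows "p s a s' = 0"
proof -
  have "(\<Sum>x\<in>UNIV. p s a x) = (\<Sum>x\<in>St. p s a x) + (\<Sum>x\<in>UNIV - St. p s a x)"
    using sum.subset_diff[of St UNIV "p s a"] by (simp add: add.commute)
  then have "(\<Sum>x\<in>UNIV - St. p s a x) = 0" using p_sum term_absorb assms(1) by simp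
  then have "\<forall>x\<in>UNIV - St. p s a x = 0"
    using sum_nonneg_eq_0_iff[of "UNIV - St" "p s a"] p_nonneg by simp
  then show ?thesis using assms by simp
qed

lemma term_one: assumes "valid pol" "s \<in> St" shows "exp_return beta p r pol n s = 1"
  using assms(2)
proof (induction n arbitrary: s)
  case 0 show ?case by simp
next
  case (Suc n)
  have "(\<Sum>s'\<in>UNIV. p s a s' * exp_return beta p r pol n s') = 1" for a
  proof -
    have "(\<Sum>s'\<in>UNIV. p s a s' * exp_return beta p r pol n s') = (\<Sum>s'\<in>UNIV. p s a s')"
    proof (rule sum.cong[OF refl])
      fix x
      show "p s a x * exp_return beta p r pol n x = p s a x"
      proof (cases "x \<in> St")
        case True then show ?thesis using Suc.IH by simp
      next
        case False then show ?thesis using p_out[OF Suc.prems False] by simp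
      qed
    qed
    then show ?thesis using p_sum by simp
  qed
  then show ?case using Suc.prems term_reward assms(1) by (simp add: valid_def)
qed

lemma ret_pos: assumes "valid pol" shows "0 < exp_return beta p r pol n s"
proof (induction n arbitrary: s)
  case 0 show ?case by simp
next
  case (Suc n)
  have inner: "0 < (\<Sum>s'\<in>UNIV. p s a s' * exp_return beta p r pol n s')" for a
  proof -
    have "\<exists>s'. p s a s' \<noteq> 0"
    proof (rule ccontr)
      assume "\<not> ?thesis"
      then have "(\<Sum>s'\<in>UNIV. p s a s') = 0" by simp
      then show False using p_sum by simp
    qed
    then obtain s' where "p s a s' \<noteq> 0" by blast
    then have "0 < p s a s'" using p_nonneg by (metis order_less_le)
    moreover have "\<And>i. 0 \<le> p s a i * exp_return beta p r pol n i"
      using p_nonneg Suc.IH by (simp add: less_imp_le)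
    ultimately show ?thesis using Suc.IH
      by (intro sum_pos2[where i=s']) auto
  qed
  have "\<exists>a. pol s a \<noteq> 0"
  proof (rule ccontr)
    assume "\<not> ?thesis"
    then have "(\<Sum>a\<in>UNIV. pol s a) = 0" by simp
    then show False using assms by (simp add: valid_def)
  qed
  then obtain a where "pol s a \<noteq> 0" by blast
  then have "0 < pol s a" using assms by (metis order_less_le valid_def)
  moreover have "\<And>i. 0 \<le> pol s i * exp (beta * r s i) * (\<Sum>s'\<in>UNIV. p s i s' * exp_return beta p r pol n s')"
    using inner assms by (simp add: valid_def less_imp_le)
  ultimately show ?case using inner
    by (simp, intro sum_pos2[where i=a]) auto
qed

lemma ret_const: assumes "valid pol"
  shows "good p St k s \<Longrightarrow> k \<le> n \<Longrightarrow> exp_return beta p r pol n s = exp_return beta p r pol k s"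
proof (induction k arbitrary: n s)
  case 0 then show ?case using term_one[OF assms] by simp
next
  case (Suc k)
  show ?case
  proof (cases "s \<in> St")
    case True then show ?thesis by (simp only: term_one[OF assms True])
  next
    case False
    then have g: "\<forall>a s'. 0 < p s a s' \<longrightarrow> good p St k s'" using Suc.prems by simp
    obtain m where n: "n = Suc m" "k \<le> m" using Suc.prems(2) by (cases n) auto
    have eq: "p s a s' * exp_return beta p r pol m s' = p s a s' * exp_return beta p r pol k s'" for a s'
    proof (cases "0 < p s a s'")
      case True then have "exp_return beta p r pol m s' = exp_return beta p r pol k s'"
        using Suc.IH[of s' m] g n by blast
      then show ?thesis by simp
    next
      case False then have "p s a s' = 0" using p_nonneg[rule_format, of s a s'] by linarith
      then show ?thesis by simp
    qed
    show ?thesis unfolding n(1) exp_return.simps by (simp only: eq)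
  qed
qed

lemma improve_pos: assumes "valid pol" "\<forall>s\<in>St. W s = 1"
  "\<forall>s. s \<notin> St \<longrightarrow> W s \<le> (\<Sum>a\<in>UNIV. pol s a * exp (beta * r s a) * (\<Sum>s'\<in>UNIV. p s a s' * W s'))"
  shows "good p St k s \<Longrightarrow> W s \<le> exp_return beta p r pol k s"
proof (induction k arbitrary: s)
  case 0 then show ?case using assms(2) by simp
next
  case (Suc k)
  show ?case
  proof (cases "s \<in> St")
    case True
    then have "W s = 1" using assms(2) by blast
    then show ?thesis using term_one[OF assms(1) True, of "Suc k"] by simp
  next
    case False
    then have g: "\<forall>a s'. 0 < p s a s' \<longrightarrow> good p St k s'" using Suc.prems by simp
    have le: "p s a s' * W s' \<le> p s a s' * exp_return beta p r pol k s'" for a s'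
    proof (cases "0 < p s a s'")
      case True then have "W s' \<le> exp_return beta p r pol k s'" using Suc.IH g by blast
      then show ?thesis using True by (simp add: mult_left_mono)
    next
      case False then have "p s a s' = 0" using p_nonneg[rule_format, of s a s'] by linarith
      then show ?thesis by simp
    qed
    have "(\<Sum>a\<in>UNIV. pol s a * exp (beta * r s a) * (\<Sum>s'\<in>UNIV. p s a s' * W s'))
        \<le> exp_return beta p r pol (Suc k) s"
      unfolding exp_return.simps
      apply (rule sum_mono) apply (rule mult_left_mono) apply (rule sum_mono) apply (rule le)
      using assms(1) by (simp add: valid_def)
    moreover have "W s \<le> (\<Sum>a\<in>UNIV. pol s a * exp (beta * r s a) * (\<Sum>s'\<in>UNIV. p s a s' * W s'))"
      using assms(3)[rule_format, OF False] .
    ultimately show ?thesis by (rule order_trans[rotated])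
  qed
qed

lemma improve_neg: assumes "valid pol" "\<forall>s\<in>St. W s = 1"
  "\<forall>s. s \<notin> St \<longrightarrow> W s \<ge> (\<Sum>a\<in>UNIV. pol s a * exp (beta * r s a) * (\<Sum>s'\<in>UNIV. p s a s' * W s'))"
  shows "good p St k s \<Longrightarrow> W s \<ge> exp_return beta p r pol k s"
proof (induction k arbitrary: s)
  case 0 then show ?case using assms(2) by simp
next
  case (Suc k)
  show ?case
  proof (cases "s \<in> St")
    case True
    then have "W s = 1" using assms(2) by blast
    then show ?thesis using term_one[OF assms(1) True, of "Suc k"] by simp
  next
    case False
    then have g: "\<forall>a s'. 0 < p s a s' \<longrightarrow> good p St k s'" using Suc.prems by simp
    have le: "p s a s' * W s' \<ge> p s a s' * exp_return beta p r pol k s'" for a s'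
    proof (cases "0 < p s a s'")
      case True then have "exp_return beta p r pol k s' \<le> W s'" using Suc.IH g by blast
      then show ?thesis using True by (simp add: mult_left_mono)
    next
      case False then have "p s a s' = 0" using p_nonneg[rule_format, of s a s'] by linarith
      then show ?thesis by simp
    qed
    have "(\<Sum>a\<in>UNIV. pol s a * exp (beta * r s a) * (\<Sum>s'\<in>UNIV. p s a s' * W s'))
        \<ge> exp_return beta p r pol (Suc k) s"
      unfolding exp_return.simps
      apply (rule sum_mono) apply (rule mult_left_mono) apply (rule sum_mono) apply (rule le)
      using assms(1) by (simp add: valid_def)
    moreover have "W s \<ge> (\<Sum>a\<in>UNIV. pol s a * exp (beta * r s a) * (\<Sum>s'\<in>UNIV. p s a s' * W s'))"
      using assms(3)[rule_format, OF False] .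
    ultimately show ?thesis by (rule order_trans)
  qed
qed

end


theorem theorem3p4:
  fixes beta :: real
    and p :: "'s::finite \<Rightarrow> 'a::finite \<Rightarrow> 's \<Rightarrow> real"
    and r :: "'s \<Rightarrow> 'a \<Rightarrow> real"
    and S_term :: "'s set"
    and T :: nat
    and pi :: "'s \<Rightarrow> 'p::euclidean_space \<Rightarrow> 'a \<Rightarrow> real"
    and grad_pi :: "'s \<Rightarrow> 'a \<Rightarrow> 'p \<Rightarrow> 'p"
    and rho_b :: "'s \<Rightarrow> real"
    and theta :: "'s \<Rightarrow> 'p"
  assumes beta_nz: "beta \<noteq> 0"
    and p_nonneg: "\<forall>s a s'. 0 \<le> p s a s'"
    and p_sum: "\<forall>s a. (\<Sum>s'\<in>UNIV. p s a s') = 1"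
    and term_reward: "\<forall>s\<in>S_term. \<forall>a. r s a = 0"
    and term_absorb: "\<forall>s\<in>S_term. \<forall>a. (\<Sum>s'\<in>S_term. p s a s') = 1"
    and horizon: "\<forall>(ss :: nat \<Rightarrow> 's) (as :: nat \<Rightarrow> 'a).
                    (\<forall>t<T. 0 < p (ss t) (as t) (ss (Suc t))) \<longrightarrow> (\<exists>t\<le>T. ss t \<in> S_term)"
    and pi_nonneg: "\<forall>s x a. 0 \<le> pi s x a"
    and pi_sum: "\<forall>s x. (\<Sum>a\<in>UNIV. pi s x a) = 1"
    and pi_deriv: "\<forall>s a x. ((\<lambda>y. pi s y a) has_derivative (\<lambda>h. grad_pi s a x \<bullet> h)) (at x)"
    and pi_C1: "\<forall>s a. continuous_on UNIV (grad_pi s a)"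
    and rho_nonneg: "\<forall>s. 0 \<le> rho_b s"
  shows "let pol = (\<lambda>s a. pi s (theta s) a);
             g = (\<lambda>s. (1 / beta) *\<^sub>R (rho_b s *\<^sub>R
                    (\<Sum>a\<in>UNIV. exp (beta * softQ beta p r pol s a) *\<^sub>R grad_pi s a (theta s))))
         in \<exists>\<epsilon>>0. \<forall>\<alpha>. 0 < \<alpha> \<and> \<alpha> < \<epsilon> \<longrightarrow>
              (\<forall>s. softV beta p r pol s
                   \<le> softV beta p r (\<lambda>s' a. pi s' (theta s' + \<alpha> *\<^sub>R g s') a) s)"
proof -
  interpret M: mdp beta p r S_term
    using p_nonneg p_sum term_reward term_absorb by (simp add: mdp_def)
  have validpi: "M.valid (\<lambda>s a. pi s (th s) a)" for th
    using pi_nonneg pi_sum by (simp add: M.valid_def)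
  have goodT: "good p S_term T s" for s using horizon_good[OF horizon] .
  have Eev: "exp_return beta p r (\<lambda>s a. pi s (th s) a) n s = exp_return beta p r (\<lambda>s a. pi s (th s) a) T s"
    if "T \<le> n" for th n s
    using M.ret_const[OF validpi goodT that] .
  have limE: "lim (\<lambda>n. exp_return beta p r (\<lambda>s a. pi s (th s) a) n s) = exp_return beta p r (\<lambda>s a. pi s (th s) a) T s"
    for th s
  proof -
    have "eventually (\<lambda>n. exp_return beta p r (\<lambda>s a. pi s (th s) a) n s = exp_return beta p r (\<lambda>s a. pi s (th s) a) T s) sequentially"
      by (rule eventually_sequentiallyI[of T], erule Eev)
    then show ?thesis by (intro limI tendsto_eventually)
  qed
  define pol where "pol = (\<lambda>s a. pi s (theta s) a)"
  define W where "W s = exp_return beta p r pol T s" for s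
  define Qe where "Qe s a = exp (beta * r s a) * (\<Sum>s'\<in>UNIV. p s a s' * W s')" for s a
  have Wpos: "0 < W s" for s unfolding W_def pol_def by (rule M.ret_pos[OF validpi])
  have Wterm: "\<forall>s\<in>S_term. W s = 1" unfolding W_def pol_def using M.term_one[OF validpi] by blast
  have Qpos: "0 < Qe s a" for s a
  proof -
    have "\<exists>s'. p s a s' \<noteq> 0"
    proof (rule ccontr)
      assume "\<not> ?thesis"
      then have "(\<Sum>s'\<in>UNIV. p s a s') = 0" by simp
      then show False using p_sum by simp
    qed
    then obtain s' where "p s a s' \<noteq> 0" by blast
    then have "0 < p s a s'" using p_nonneg by (metis order_less_le)
    then have "0 < p s a s' * W s'" using Wpos by simp
    moreover have "\<And>i. 0 \<le> p s a i * W i" using p_nonneg Wpos by (simp add: less_imp_le)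
    ultimately have "0 < (\<Sum>s'\<in>UNIV. p s a s' * W s')" by (intro sum_pos2[where i=s']) auto
    then show ?thesis unfolding Qe_def by simp
  qed
  have limQ: "lim (\<lambda>n. exp_return_sa beta p r pol n s a) = Qe s a" for s a
  proof -
    have "eventually (\<lambda>n. exp_return_sa beta p r pol n s a = Qe s a) sequentially"
    proof (rule eventually_sequentiallyI[of T])
      fix n assume "T \<le> n"
      then have "exp_return beta p r pol n s' = W s'" for s' unfolding W_def pol_def by (rule Eev)
      then show "exp_return_sa beta p r pol n s a = Qe s a" by (simp add: exp_return_sa_def Qe_def)
    qed
    then show ?thesis by (intro limI tendsto_eventually)
  qed
  have expQ: "exp (beta * softQ beta p r pol s a) = Qe s a" for s a
    unfolding softQ_def limQ using beta_nz Qpos[of s a] by simp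
  have softV_pol: "softV beta p r pol s = ln (W s) / beta" for s
    by (simp add: softV_def W_def pol_def limE)
  have W_eq: "W s = (\<Sum>a\<in>UNIV. pol s a * Qe s a)" for s
  proof -
    have "W s = exp_return beta p r pol (Suc T) s" unfolding W_def pol_def by (rule Eev[symmetric]) simp
    then show ?thesis by (simp add: Qe_def mult.assoc W_def)
  qed
  define G where "G s = (\<Sum>a\<in>UNIV. Qe s a *\<^sub>R grad_pi s a (theta s))" for s
  define g where "g s = (1 / beta) *\<^sub>R (rho_b s *\<^sub>R G s)" for s
  have g_pt: "(1 / beta) *\<^sub>R (rho_b s *\<^sub>R (\<Sum>a\<in>UNIV. exp (beta * softQ beta p r (\<lambda>s a. pi s (theta s) a) s a) *\<^sub>R grad_pi s a (theta s))) = g s" for s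
    using expQ unfolding pol_def by (simp add: g_def G_def)
  define phi where "phi s \<alpha> = (\<Sum>a\<in>UNIV. pi s (theta s + \<alpha> *\<^sub>R g s) a * Qe s a)" for s \<alpha>
  have phi0: "phi s 0 = W s" for s by (simp add: phi_def W_eq pol_def)
  have key: "\<exists>e>0. \<forall>\<alpha>. 0 < \<alpha> \<and> \<alpha> < e \<longrightarrow> (0 < beta \<longrightarrow> W s \<le> phi s \<alpha>) \<and> (beta < 0 \<longrightarrow> phi s \<alpha> \<le> W s)" for s
  proof (cases "g s = 0")
    case True
    then have "phi s \<alpha> = W s" for \<alpha> using phi0[of s] by (simp add: phi_def)
    then show ?thesis by (intro exI[of _ 1]) simp
  next
    case False
    then have rho: "rho_b s \<noteq> 0" and Gnz: "G s \<noteq> 0" by (auto simp: g_def)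
    have d1: "((\<lambda>\<alpha>. pi s (theta s + \<alpha> *\<^sub>R g s) a) has_real_derivative (grad_pi s a (theta s) \<bullet> g s)) (at 0)" for a
    proof -
      have h1: "((\<lambda>\<alpha>::real. theta s + \<alpha> *\<^sub>R g s) has_derivative (\<lambda>h. h *\<^sub>R g s)) (at 0)"
        by (auto intro!: derivative_eq_intros)
      have h2: "((\<lambda>y. pi s y a) has_derivative (\<lambda>h. grad_pi s a (theta s) \<bullet> h)) (at (theta s + 0 *\<^sub>R g s))"
        using pi_deriv by simp
      have "((\<lambda>\<alpha>. pi s (theta s + \<alpha> *\<^sub>R g s) a) has_derivative (\<lambda>h. grad_pi s a (theta s) \<bullet> (h *\<^sub>R g s))) (at 0)"
        using has_derivative_compose[OF h1 h2] by simp
      moreover have "(\<lambda>h. grad_pi s a (theta s) \<bullet> (h *\<^sub>R g s)) = (*) (grad_pi s a (theta s) \<bullet> g s)"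
        by (rule ext) (simp add: mult.commute)
      ultimately show ?thesis by (simp add: has_field_derivative_def)
    qed
    have phi_fun: "phi s = (\<lambda>\<alpha>. \<Sum>a\<in>UNIV. pi s (theta s + \<alpha> *\<^sub>R g s) a * Qe s a)"
      by (rule ext) (simp add: phi_def)
    have dphi: "((phi s) has_real_derivative (\<Sum>a\<in>UNIV. (grad_pi s a (theta s) \<bullet> g s) * Qe s a)) (at 0)"
      unfolding phi_fun by (rule DERIV_sum, rule DERIV_cmult_right, rule d1)
    have "(\<Sum>a\<in>UNIV. (grad_pi s a (theta s) \<bullet> g s) * Qe s a) = G s \<bullet> g s"
      by (simp add: G_def inner_sum_left mult.commute)
    also have "\<dots> = (rho_b s / beta) * (G s \<bullet> G s)" by (simp add: g_def)
    finally have D: "(\<Sum>a\<in>UNIV. (grad_pi s a (theta s) \<bullet> g s) * Qe s a) = (rho_b s / beta) * (G s \<bullet> G s)" .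
    have GG: "0 < G s \<bullet> G s" using Gnz by simp
    have rpos: "0 < rho_b s" using rho rho_nonneg by (metis order_less_le)
    show ?thesis
    proof (cases "0 < beta")
      case True
      then have "0 < (rho_b s / beta) * (G s \<bullet> G s)" using GG rpos by simp
      from DERIV_pos_inc_right[OF dphi[unfolded D] this] obtain d where
        d: "d > 0" "\<forall>h>0. h < d \<longrightarrow> phi s 0 < phi s (0 + h)" by blast
      show ?thesis using d phi0[of s] True by (intro exI[of _ d]) auto
    next
      case False
      then have neg: "beta < 0" using beta_nz by linarith
      then have "(rho_b s / beta) * (G s \<bullet> G s) < 0" using GG rpos
        by (simp add: divide_pos_neg mult_neg_pos)
      from DERIV_neg_dec_right[OF dphi[unfolded D] this] obtain d where
        d: "d > 0" "\<forall>h>0. h < d \<longrightarrow> phi s 0 > phi s (0 + h)" by blast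
      show ?thesis using d phi0[of s] neg by (intro exI[of _ d]) auto
    qed
  qed
  from key have "\<forall>s. \<exists>e. 0 < e \<and> (\<forall>\<alpha>. 0 < \<alpha> \<and> \<alpha> < e \<longrightarrow> (0 < beta \<longrightarrow> W s \<le> phi s \<alpha>) \<and> (beta < 0 \<longrightarrow> phi s \<alpha> \<le> W s))"
    by blast
  then obtain e where e: "\<forall>s. 0 < e s \<and> (\<forall>\<alpha>. 0 < \<alpha> \<and> \<alpha> < e s \<longrightarrow> (0 < beta \<longrightarrow> W s \<le> phi s \<alpha>) \<and> (beta < 0 \<longrightarrow> phi s \<alpha> \<le> W s))"
    by (metis choice)
  define eps where "eps = Min (range e)"
  have eps_pos: "0 < eps" unfolding eps_def using e by simp
  have eps_le: "eps \<le> e s" for s unfolding eps_def by (rule Min_le) auto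
  have main: "\<exists>\<epsilon>>0. \<forall>\<alpha>. 0 < \<alpha> \<and> \<alpha> < \<epsilon> \<longrightarrow>
     (\<forall>s. softV beta p r pol s \<le> softV beta p r (\<lambda>s' a. pi s' (theta s' + \<alpha> *\<^sub>R g s') a) s)"
  proof (intro exI[of _ eps] conjI allI impI eps_pos)
    fix \<alpha> s assume \<alpha>: "0 < \<alpha> \<and> \<alpha> < eps"
    define pol' where "pol' = (\<lambda>s' a. pi s' (theta s' + \<alpha> *\<^sub>R g s') a)"
    have v': "M.valid pol'" unfolding pol'_def by (rule validpi)
    have cond: "(0 < beta \<longrightarrow> W s \<le> phi s \<alpha>) \<and> (beta < 0 \<longrightarrow> phi s \<alpha> \<le> W s)" for s
    proof -
      have "\<alpha> < e s" using \<alpha> eps_le[of s] by linarith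
      then show ?thesis using e \<alpha> by blast
    qed
    have phi_eq: "phi s \<alpha> = (\<Sum>a\<in>UNIV. pol' s a * exp (beta * r s a) * (\<Sum>s'\<in>UNIV. p s a s' * W s'))" for s
      by (simp add: phi_def pol'_def Qe_def mult.assoc)
    have E'pos: "0 < exp_return beta p r pol' T s" by (rule M.ret_pos[OF v'])
    have softV': "softV beta p r pol' s = ln (exp_return beta p r pol' T s) / beta"
      unfolding pol'_def by (simp add: softV_def limE)
    have "softV beta p r pol s \<le> softV beta p r pol' s"
    proof (cases "0 < beta")
      case True
      have "W s \<le> exp_return beta p r pol' T s"
        by (rule M.improve_pos[OF v' Wterm _ goodT]) (use cond phi_eq True in auto)
      then have "ln (W s) \<le> ln (exp_return beta p r pol' T s)" using Wpos[of s] E'pos by simp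
      then show ?thesis unfolding softV' softV_pol using True by (simp add: divide_right_mono)
    next
      case False
      then have neg: "beta < 0" using beta_nz by linarith
      have "exp_return beta p r pol' T s \<le> W s"
        by (rule M.improve_neg[OF v' Wterm _ goodT]) (use cond phi_eq neg in auto)
      then have "ln (exp_return beta p r pol' T s) \<le> ln (W s)" using Wpos[of s] E'pos by simp
      then show ?thesis unfolding softV' softV_pol using neg by (simp add: divide_right_mono_neg)
    qed
    then show "softV beta p r pol s \<le> softV beta p r (\<lambda>s' a. pi s' (theta s' + \<alpha> *\<^sub>R g s') a) s"
      unfolding pol'_def .
  qed
  show ?thesis using main unfolding Let_def pol_def by (simp only: g_pt)
qed

end
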